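(* Let $G$ be a simple directed graph and $\sigma$ a set of its nodes such that $G|_\sigma$ is a clique missing exactly one edge $j\not\to i$. Then for legal $\varepsilon,\delta$, $I-W_\sigma$ has Perron–Frobenius eigenvalue $$\lambda_{\max}=\varepsilon+\tfrac12(1-\varepsilon)\Big(|\sigma|+\sqrt{|\sigma|^2+4(\delta+\varepsilon)/(1-\varepsilon)}\Big).$$
   Context: A clique is a set of nodes pairwise bidirectionally connected; "missing exactly one edge" means all ordered pairs of distinct nodes of $\sigma$ are edges except one. Legal parameters: $\delta>0$, $0<\varepsilon<\frac{\delta}{\delta+1}$. $W=W(G,\varepsilon,\delta)$ has $W_{ii}=0$, $W_{ij}=-1+\varepsilon$ if $j\to i$, $W_{ij}=-1-\delta$ if $i\neq j$, $j\not\to i$; $W_\sigma$ is the principal submatrix on $\sigma$. $I-W_\sigma$ has positive entries and $\lambda_{\max}$ is its Perron–Frobenius eigenvalue. *)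

theory Defs
  imports Complex_Main "Jordan_Normal_Form.Spectral_Radius" "Jordan_Normal_Form.DL_Submatrix"
begin

text \<open>Nodes of G are 0..<n; E j i means there is an edge j -> i.
  A simple directed graph: edges only between distinct nodes of the graph.\<close>
definition simple_digraph :: "nat \<Rightarrow> (nat \<Rightarrow> nat \<Rightarrow> bool) \<Rightarrow> bool" where
  "simple_digraph n E \<longleftrightarrow> (\<forall>a b. E a b \<longrightarrow> a < n \<and> b < n \<and> a \<noteq> b)"

definition W_mat :: "nat \<Rightarrow> (nat \<Rightarrow> nat \<Rightarrow> bool) \<Rightarrow> real \<Rightarrow> real \<Rightarrow> real mat" where
  "W_mat n E \<epsilon> \<delta> = mat n n (\<lambda>(i, j). if i = j then 0 else if E j i then -1 + \<epsilon> else -1 - \<delta>)"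

text \<open>Principal submatrix on sigma (rows/columns in increasing order).\<close>
definition W_sub :: "nat \<Rightarrow> (nat \<Rightarrow> nat \<Rightarrow> bool) \<Rightarrow> real \<Rightarrow> real \<Rightarrow> nat set \<Rightarrow> real mat" where
  "W_sub n E \<epsilon> \<delta> \<sigma> = submatrix (W_mat n E \<epsilon> \<delta>) \<sigma> \<sigma>"

definition pf_eigenvalue :: "real mat \<Rightarrow> real \<Rightarrow> bool" where
  "pf_eigenvalue A lam \<longleftrightarrow> eigenvalue A lam \<and> spectral_radius (map_mat complex_of_real A) = lam"

end

theory Submission
  imports Defs
begin

lemma mult_form:
  fixes d e :: "'a::field"
  assumes N: "N \<in> carrier_mat k k"
    and Ne: "\<And>r c. r < k \<Longrightarrow> c < k \<Longrightarrow> N $$ (r,c) = (if r = c then 1 else if r = p \<and> c = q then 1 + d else 1 - e)"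
    and pq: "p \<noteq> q" "q < k" and v: "v \<in> carrier_vec k" and r: "r < k"
  shows "(N *\<^sub>v v) $ r = e * v $ r + (1 - e) * sum (\<lambda>c. v $ c) {0..<k}
            + (if r = p then (d + e) * v $ q else 0)"
proof -
  have "(N *\<^sub>v v) $ r = (\<Sum>c\<in>{0..<k}. N $$ (r,c) * v $ c)"
    using N v r by (simp add: mult_mat_vec_def scalar_prod_def)
  also have "\<dots> = (\<Sum>c\<in>{0..<k}. (1 - e) * v $ c + (if c = r then e * v $ c else 0)
        + (if c = q then (if r = p then (d + e) * v $ c else 0) else 0))"
    using pq r by (intro sum.cong) (auto simp: Ne algebra_simps)
  also have "\<dots> = e * v $ r + (1 - e) * sum (\<lambda>c. v $ c) {0..<k}
            + (if r = p then (d + e) * v $ q else 0)"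
    using r pq by (simp only: sum.distrib) (simp add: sum.delta sum_distrib_left)
  finally show ?thesis .
qed

lemma eigvec_form:
  fixes d e \<mu> :: "'a::field"
  assumes N: "N \<in> carrier_mat k k"
    and Ne: "\<And>r c. r < k \<Longrightarrow> c < k \<Longrightarrow> N $$ (r,c) = (if r = c then 1 else if r = p \<and> c = q then 1 + d else 1 - e)"
    and pq: "p \<noteq> q" "q < k" "p < k"
    and quad: "\<mu>^2 = (1 - e) * of_nat k * \<mu> + (1 - e) * (d + e)" and mu: "\<mu> \<noteq> 0"
  shows "eigenvalue N (e + \<mu>)"
proof -
  define v where "v = vec k (\<lambda>r. \<mu> + (if r = p then d + e else 0))"
  have vc: "v \<in> carrier_vec k" unfolding v_def by simp
  have s: "sum (\<lambda>c. v $ c) {0..<k} = of_nat k * \<mu> + (d + e)"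
    unfolding v_def using pq by (simp add: sum.distrib sum.delta' cong: if_cong)
  have "N *\<^sub>v v = (e + \<mu>) \<cdot>\<^sub>v v"
  proof (rule eq_vecI)
    fix r assume r: "r < dim_vec ((e + \<mu>) \<cdot>\<^sub>v v)"
    hence r: "r < k" using vc by simp
    have vq: "v $ q = \<mu>" using pq unfolding v_def by simp
    show "(N *\<^sub>v v) $ r = ((e + \<mu>) \<cdot>\<^sub>v v) $ r"
    proof -
      have eq: "(N *\<^sub>v v) $ r = e * v $ r + (1 - e) * (of_nat k * \<mu> + (d + e))
          + (if r = p then (d + e) * \<mu> else 0)"
        using mult_form[OF N Ne pq(1,2) vc r] s vq by simp
      have vr: "v $ r = \<mu> + (if r = p then d + e else 0)" using r unfolding v_def by simp
      have rhs: "((e + \<mu>) \<cdot>\<^sub>v v) $ r = (e + \<mu>) * v $ r" using r vc by simp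
      have q2: "\<mu> * \<mu> = (1 - e) * of_nat k * \<mu> + (1 - e) * (d + e)"
        using quad by (simp add: power2_eq_square)
      show ?thesis
      proof (cases "r = p")
        case True
        have "e * (\<mu> + (d + e)) + (1 - e) * (of_nat k * \<mu> + (d + e)) + (d + e) * \<mu>
            = (e + \<mu>) * (\<mu> + (d + e)) + ((1 - e) * of_nat k * \<mu> + (1 - e) * (d + e) - \<mu> * \<mu>)"
          by (simp add: algebra_simps)
        thus ?thesis using True eq vr rhs q2 by simp
      next
        case False
        have "e * \<mu> + (1 - e) * (of_nat k * \<mu> + (d + e))
            = (e + \<mu>) * \<mu> + ((1 - e) * of_nat k * \<mu> + (1 - e) * (d + e) - \<mu> * \<mu>)"
          by (simp add: algebra_simps)
        thus ?thesis using False eq vr rhs q2 by simp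
      qed
    qed
  qed (use N vc in auto)
  moreover have "v \<noteq> 0\<^sub>v k"
  proof
    assume "v = 0\<^sub>v k"
    hence "v $ q = 0" using pq by simp
    thus False using pq mu unfolding v_def by simp
  qed
  ultimately show ?thesis using N vc unfolding eigenvalue_def eigenvector_def by auto
qed

lemma eigval_form:
  fixes d e lam :: "'a::field"
  assumes N: "N \<in> carrier_mat k k"
    and Ne: "\<And>r c. r < k \<Longrightarrow> c < k \<Longrightarrow> N $$ (r,c) = (if r = c then 1 else if r = p \<and> c = q then 1 + d else 1 - e)"
    and pq: "p \<noteq> q" "q < k" "p < k"
    and ev: "eigenvalue N lam"
  shows "lam = e \<or> (lam - e)^2 = (1 - e) * of_nat k * (lam - e) + (1 - e) * (d + e)"
proof (cases "lam = e")
  case False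
  define \<mu> where "\<mu> = lam - e"
  have mu: "\<mu> \<noteq> 0" using False unfolding \<mu>_def by simp
  from ev obtain v where vc: "v \<in> carrier_vec k" and v0: "v \<noteq> 0\<^sub>v k" and Av: "N *\<^sub>v v = lam \<cdot>\<^sub>v v"
    using N unfolding eigenvalue_def eigenvector_def by auto
  define s where "s = sum (\<lambda>c. v $ c) {0..<k}"
  define a where "a = (1 - e) * s / \<mu>"
  define b where "b = (d + e) * v $ q / \<mu>"
  have vr: "v $ r = a + (if r = p then b else 0)" if r: "r < k" for r
  proof -
    have "lam * v $ r = e * v $ r + (1 - e) * s + (if r = p then (d + e) * v $ q else 0)"
      using mult_form[OF N Ne pq(1,2) vc r] Av r vc unfolding s_def by simp
    hence "\<mu> * v $ r = (1 - e) * s + (if r = p then (d + e) * v $ q else 0)"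
      unfolding \<mu>_def by (simp add: algebra_simps)
    hence "v $ r = ((1 - e) * s + (if r = p then (d + e) * v $ q else 0)) / \<mu>"
      using mu by (simp add: field_simps)
    thus ?thesis unfolding a_def b_def by (simp add: add_divide_distrib)
  qed
  have vq: "v $ q = a" using vr[OF pq(2)] pq by simp
  have ss: "s = of_nat k * a + b"
    unfolding s_def using vr pq by (simp add: sum.distrib sum.delta)
  have "\<mu> * a = (1 - e) * s" unfolding a_def using mu by simp
  hence e1: "\<mu> * a = (1 - e) * (of_nat k * a + b)" using ss by simp
  have e2: "\<mu> * b = (d + e) * a" unfolding b_def using mu vq by simp
  have a0: "a \<noteq> 0"
  proof
    assume a: "a = 0"
    hence "b = 0" using e2 mu by simp
    hence "v = 0\<^sub>v k" using vr a vc by (intro eq_vecI) auto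
    thus False using v0 by simp
  qed
  have "\<mu> * \<mu> * a = (1 - e) * of_nat k * \<mu> * a + (1 - e) * (\<mu> * b)"
    using arg_cong[OF e1, of "\<lambda>x. \<mu> * x"] by (simp add: algebra_simps)
  also have "\<dots> = ((1 - e) * of_nat k * \<mu> + (1 - e) * (d + e)) * a"
    unfolding e2 by (simp add: algebra_simps)
  finally have "\<mu> * \<mu> = (1 - e) * of_nat k * \<mu> + (1 - e) * (d + e)" using a0 by simp
  thus ?thesis unfolding \<mu>_def by (simp add: power2_eq_square)
qed simp

lemma pf_form:
  fixes \<delta> \<epsilon> :: real
  assumes N: "N \<in> carrier_mat k k"
    and Ne: "\<And>r c. r < k \<Longrightarrow> c < k \<Longrightarrow> N $$ (r,c) = (if r = c then 1 else if r = p \<and> c = q then 1 + \<delta> else 1 - \<epsilon>)"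
    and pq: "p \<noteq> q" "q < k" "p < k"
    and d: "\<delta> > 0" and e: "0 < \<epsilon>" "\<epsilon> < 1"
  shows "pf_eigenvalue N (\<epsilon> + (1 - \<epsilon>) / 2 * (real k + sqrt ((real k)\<^sup>2 + 4 * (\<delta> + \<epsilon>) / (1 - \<epsilon>))))"
proof -
  define S where "S = sqrt ((real k)\<^sup>2 + 4 * (\<delta> + \<epsilon>) / (1 - \<epsilon>))"
  define mp where "mp = (1 - \<epsilon>) / 2 * (real k + S)"
  define mm where "mm = (1 - \<epsilon>) * real k - mp"
  define lam where "lam = \<epsilon> + mp"
  have "4 * (\<delta> + \<epsilon>) / (1 - \<epsilon>) > 0" using d e by (intro divide_pos_pos) auto
  hence Dpos: "(real k)\<^sup>2 + 4 * (\<delta> + \<epsilon>) / (1 - \<epsilon>) > 0" by (simp add: add_nonneg_pos)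
  hence S2: "S^2 = (real k)\<^sup>2 + 4 * (\<delta> + \<epsilon>) / (1 - \<epsilon>)" unfolding S_def by simp
  have Spos: "S > 0" unfolding S_def using Dpos by simp
  have Sk: "S \<ge> real k" unfolding S_def using d e by (intro real_le_rsqrt) simp
  have mppos: "mp > 0" unfolding mp_def using e Spos by simp
  have quad: "mp^2 = (1 - \<epsilon>) * real k * mp + (1 - \<epsilon>) * (\<delta> + \<epsilon>)"
  proof -
    have "mp^2 = (1 - \<epsilon>)^2 / 4 * ((real k)^2 + 2 * real k * S + S^2)"
      unfolding mp_def power_mult_distrib power2_sum by (simp add: power_divide)
    also have "\<dots> = (1 - \<epsilon>) * real k * mp + (1 - \<epsilon>) * (\<delta> + \<epsilon>)"
      unfolding S2 mp_def using e by (simp add: field_simps power2_eq_square)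
    finally show ?thesis .
  qed
  have prod: "mp * mm = - ((1 - \<epsilon>) * (\<delta> + \<epsilon>))"
    unfolding mm_def using quad by (simp add: algebra_simps power2_eq_square)
  have mmle: "mm \<le> mp" unfolding mm_def mp_def using Sk e Spos
    by (simp add: field_simps)
  have mmge: "mm + mp \<ge> 0" unfolding mm_def using e by simp
  have lampos: "lam > 0" unfolding lam_def using e mppos by simp
  have ev: "eigenvalue N lam"
    unfolding lam_def
    by (rule eigvec_form[OF N Ne pq]) (use quad mppos in simp_all)
  define C where "C = map_mat complex_of_real N"
  have C: "C \<in> carrier_mat k k" using N unfolding C_def by simp
  have Ce: "\<And>r c. r < k \<Longrightarrow> c < k \<Longrightarrow> C $$ (r,c) = (if r = c then 1 else if r = p \<and> c = q then 1 + complex_of_real \<delta> else 1 - complex_of_real \<epsilon>)"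
    unfolding C_def using N Ne by auto
  have evC: "eigenvalue C (complex_of_real \<epsilon> + complex_of_real mp)"
  proof (rule eigvec_form[OF C Ce pq])
    show "(complex_of_real mp)\<^sup>2 = (1 - complex_of_real \<epsilon>) * of_nat k * complex_of_real mp +
      (1 - complex_of_real \<epsilon>) * (complex_of_real \<delta> + complex_of_real \<epsilon>)"
      using arg_cong[OF quad, of complex_of_real] by simp
  qed (use mppos in auto)
  have bound: "norm z \<le> lam" if z: "z \<in> spectrum C" for z
  proof -
    have "eigenvalue C z" using z unfolding spectrum_def by simp
    from eigval_form[OF C Ce pq this]
    consider "z = complex_of_real \<epsilon>"
      | "(z - complex_of_real \<epsilon>)^2 = (1 - complex_of_real \<epsilon>) * of_nat k * (z - complex_of_real \<epsilon>)
           + (1 - complex_of_real \<epsilon>) * (complex_of_real \<delta> + complex_of_real \<epsilon>)" by blast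
    thus ?thesis
    proof cases
      case 1 thus ?thesis using e mppos unfolding lam_def by simp
    next
      case 2
      define w where "w = z - complex_of_real \<epsilon>"
      have "(w - complex_of_real mp) * (w - complex_of_real mm)
         = w^2 - complex_of_real ((1 - \<epsilon>) * real k) * w + complex_of_real (mp * mm)"
        unfolding mm_def by (simp add: algebra_simps power2_eq_square)
      also have "\<dots> = 0" unfolding prod using 2 unfolding w_def by (simp add: algebra_simps)
      finally have "w = complex_of_real mp \<or> w = complex_of_real mm" by simp
      hence "z = complex_of_real (\<epsilon> + mp) \<or> z = complex_of_real (\<epsilon> + mm)" unfolding w_def by (auto simp: algebra_simps)
      then obtain x where zx: "z = complex_of_real x" and x: "x = \<epsilon> + mp \<or> x = \<epsilon> + mm" by blast
      have "norm z = \<bar>x\<bar>" unfolding zx by (rule norm_of_real)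
      thus ?thesis using x mmle mmge e mppos unfolding lam_def by (auto simp: abs_le_iff)
    qed
  qed
  have kpos: "k > 0" using pq by simp
  have lamin: "lam \<in> norm ` spectrum C"
  proof
    show "complex_of_real (\<epsilon> + mp) \<in> spectrum C" using evC unfolding spectrum_def by simp
    have "norm (complex_of_real (\<epsilon> + mp)) = \<bar>\<epsilon> + mp\<bar>" by (rule norm_of_real)
    thus "lam = norm (complex_of_real (\<epsilon> + mp))" using lampos unfolding lam_def by simp
  qed
  have "spectral_radius C = lam"
  proof (rule antisym)
    show "lam \<le> spectral_radius C" using spectral_radius_mem_max(2)[OF C kpos lamin] .
    from spectral_radius_mem_max(1)[OF C kpos] obtain z where
      "z \<in> spectrum C" "spectral_radius C = norm z" by blast
    thus "spectral_radius C \<le> lam" using bound by simp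
  qed
  thus ?thesis using ev unfolding pf_eigenvalue_def C_def lam_def mp_def S_def by simp
qed

theorem corollary3:
  fixes n :: nat and E :: "nat \<Rightarrow> nat \<Rightarrow> bool" and \<sigma> :: "nat set"
    and i j :: nat and \<epsilon> \<delta> :: real
  assumes "simple_digraph n E"
    and "\<sigma> \<subseteq> {0..<n}"
    and "i \<in> \<sigma>" and "j \<in> \<sigma>" and "i \<noteq> j" and "\<not> E j i"
    and "\<forall>a\<in>\<sigma>. \<forall>b\<in>\<sigma>. a \<noteq> b \<and> (a, b) \<noteq> (j, i) \<longrightarrow> E a b"
    and "\<delta> > 0" and "0 < \<epsilon>" and "\<epsilon> < \<delta> / (\<delta> + 1)"
  shows "pf_eigenvalue (1\<^sub>m (card \<sigma>) - W_sub n E \<epsilon> \<delta> \<sigma>)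
           (\<epsilon> + (1 - \<epsilon>) / 2 * (real (card \<sigma>)
              + sqrt ((real (card \<sigma>))\<^sup>2 + 4 * (\<delta> + \<epsilon>) / (1 - \<epsilon>))))"
proof -
  note as = assms
  have fin: "finite \<sigma>" using as(2) finite_subset by blast
  define k where "k = card \<sigma>"
  have dimW: "dim_row (W_mat n E \<epsilon> \<delta>) = n" "dim_col (W_mat n E \<epsilon> \<delta>) = n"
    unfolding W_mat_def by simp_all
  have cs: "{a. a < n \<and> a \<in> \<sigma>} = \<sigma>" using as(2) by auto
  have Wsub: "W_sub n E \<epsilon> \<delta> \<sigma> \<in> carrier_mat k k"
    unfolding W_sub_def carrier_mat_def k_def using dim_submatrix[of "W_mat n E \<epsilon> \<delta>" \<sigma> \<sigma>] dimW cs by simp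
  define N where "N = 1\<^sub>m k - W_sub n E \<epsilon> \<delta> \<sigma>"
  have N: "N \<in> carrier_mat k k" unfolding N_def using Wsub by (auto intro: minus_carrier_mat)
  have pin: "pick \<sigma> r \<in> \<sigma>" if "r < k" for r using pick_in_set_le that unfolding k_def by blast
  have pinj: "pick \<sigma> r = pick \<sigma> c \<Longrightarrow> r = c" if "r < k" "c < k" for r c
    using card_pick_le[of r \<sigma>] card_pick_le[of c \<sigma>] that unfolding k_def by metis
  define p where "p = card {a\<in>\<sigma>. a < i}"
  define q where "q = card {a\<in>\<sigma>. a < j}"
  have pp: "pick \<sigma> p = i" unfolding p_def using as(3) by (rule pick_card_in_set)
  have qq: "pick \<sigma> q = j" unfolding q_def using as(4) by (rule pick_card_in_set)
  have pk: "p < k" unfolding p_def k_def using as(3) fin by (intro psubset_card_mono) auto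
  have qk: "q < k" unfolding q_def k_def using as(4) fin by (intro psubset_card_mono) auto
  have pq: "p \<noteq> q" using pp qq as(5) by auto
  have Ne: "N $$ (r,c) = (if r = c then 1 else if r = p \<and> c = q then 1 + \<delta> else 1 - \<epsilon>)"
    if r: "r < k" and c: "c < k" for r c
  proof -
    have rr: "r < card {i. i < dim_row (W_mat n E \<epsilon> \<delta>) \<and> i \<in> \<sigma>}" using r dimW cs k_def by simp
    have cc: "c < card {i. i < dim_col (W_mat n E \<epsilon> \<delta>) \<and> i \<in> \<sigma>}" using c dimW cs k_def by simp
    have "N $$ (r,c) = (if r = c then 1 else 0) - W_mat n E \<epsilon> \<delta> $$ (pick \<sigma> r, pick \<sigma> c)"
      unfolding N_def W_sub_def using Wsub r c submatrix_index[OF rr cc] by (simp add: W_sub_def)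
    also have "\<dots> = (if r = c then 1 else 0) - (if pick \<sigma> r = pick \<sigma> c then 0 else
        if E (pick \<sigma> c) (pick \<sigma> r) then -1 + \<epsilon> else -1 - \<delta>)"
    proof -
      have "pick \<sigma> r < n" "pick \<sigma> c < n" using pin[OF r] pin[OF c] as(2) by auto
      thus ?thesis unfolding W_mat_def by simp
    qed
    also have "\<dots> = (if r = c then 1 else if r = p \<and> c = q then 1 + \<delta> else 1 - \<epsilon>)"
    proof (cases "r = c")
      case False
      hence ne: "pick \<sigma> r \<noteq> pick \<sigma> c" using pinj r c by blast
      have "E (pick \<sigma> c) (pick \<sigma> r) \<longleftrightarrow> \<not> (r = p \<and> c = q)"
      proof
        assume "E (pick \<sigma> c) (pick \<sigma> r)"
        thus "\<not> (r = p \<and> c = q)" using pp qq as(6) by auto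
      next
        assume h: "\<not> (r = p \<and> c = q)"
        have "(pick \<sigma> c, pick \<sigma> r) \<noteq> (j, i)"
          using h pinj[OF c qk] pinj[OF r pk] pp qq by auto
        thus "E (pick \<sigma> c) (pick \<sigma> r)" using as(7) pin[OF r] pin[OF c] ne by auto
      qed
      thus ?thesis using False ne by auto
    qed simp
    finally show ?thesis .
  qed
  have "\<delta> / (\<delta> + 1) < 1" using as(8) by simp
  hence e1: "\<epsilon> < 1" using as(10) by linarith
  show ?thesis
    using pf_form[OF N Ne pq qk pk as(8) as(9) e1] unfolding N_def k_def .
qed

end
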